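(* Let $\mathcal{F}$ be a monotone feature. Then the ip-function generators $\sigma^{\mathcal{F}}=\varrho^{\mathcal{F}}$ are balanced: for every graph $G=(V,E)$, every two filtering functions $f,g:E\to\mathbb{R}$ and every $h>0$ with $\sup_{e\in E}|f(e)-g(e)|\le h$, one has $\sigma^{\mathcal{F}}_{(G,f)}(u-h,v+h)\le\sigma^{\mathcal{F}}_{(G,g)}(u,v)$ for all $(u,v)\in\Delta^+$.
   Context: Graphs are finite simple undirected graphs; a weighted graph is $(G,f)$ with $f:E\to\mathbb{R}$. For $u\in\mathbb{R}$, $G_u=(V_u,E_u)$ is the subgraph induced by the edge set $f^{-1}((-\infty,u])$, $G_{+\infty}=G$. Only subgraphs induced by edge sets are considered. $\Delta^+=\{(u,v)\in\mathbb{R}\times(\mathbb{R}\cup\{+\infty\}):u<v\}$, with $+\infty+h=+\infty$. A feature $\mathcal{F}$ assigns to every graph $H=(V_H,E_H)$ a function $2^{V_H\cup E_H}\to\{true,false\}$. It is monotone if (i) for any graphs $G'=(V',E')\subset G''$ and any $X\subseteq V'\cup E'$, $\mathcal{F}(X)=true$ in $G''$ implies $\mathcal{F}(X)=true$ in $G'$; and (ii) in any graph, for $Y\subset X$, $\mathcal{F}(X)=true$ implies $\mathcal{F}(Y)=true$. $X\subseteq V\cup E$ is an $\mathcal{F}$-set at level $w$ in $(G,f)$ if $X\subseteq V_w\cup E_w$ and $\mathcal{F}(X)=true$ in $G_w$; steady at $(u,v)$ if an $\mathcal{F}$-set at all levels $w\in[u,v]$; ranging at $(u,v)$ if an $\mathcal{F}$-set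 at some level $w\le u$ and some level $w'\ge v$. $\sigma^{\mathcal{F}}_{(G,f)}(u,v)$, $\varrho^{\mathcal{F}}_{(G,f)}(u,v)$ are the numbers of steady, resp. ranging, $\mathcal{F}$-sets at $(u,v)$ (for monotone $\mathcal{F}$ these coincide). An ip-function generator $p$ (a map assigning to each weighted graph a function $p_{(G,f)}:\Delta^+\to\mathbb{Z}$ satisfying the persistence inequalities, invariant under isomorphism of weighted graphs) is balanced if whenever $\psi:G\to G'$ is a graph isomorphism and $\sup_{e\in E}|f(e)-f'(\psi(e))|\le h$ with $h>0$, then $p_{(G,f)}(u-h,v+h)\le p_{(G',f')}(u,v)$ for all $(u,v)\in\Delta^+$; equivalently, the single-graph condition stated in the claim holds. *)

theory Defs
  imports "HOL-Analysis.Analysis" "HOL-Library.Extended_Real"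
begin

definition is_graph :: "'a set \<Rightarrow> 'a set set \<Rightarrow> bool" where
  "is_graph V E \<longleftrightarrow> finite V \<and>
     (\<forall>e\<in>E. \<exists>x y. x \<noteq> y \<and> e = {x, y} \<and> x \<in> V \<and> y \<in> V)"

definition elems :: "'a set \<Rightarrow> 'a set set \<Rightarrow> ('a + 'a set) set" where
  "elems V E = Inl ` V \<union> Inr ` E"

text \<open>A feature: for each graph (V,E), a predicate on subsets of V \<union> E.\<close>
type_synonym 'a feature = "'a set \<Rightarrow> 'a set set \<Rightarrow> ('a + 'a set) set \<Rightarrow> bool"

definition monotone_feature :: "'a feature \<Rightarrow> bool" where
  "monotone_feature F \<longleftrightarrow>
     (\<forall>V1 E1 V2 E2 X. is_graph V1 E1 \<and> is_graph V2 E2 \<and> V1 \<subseteq> V2 \<and> E1 \<subseteq> E2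
        \<and> X \<subseteq> elems V1 E1 \<and> F V2 E2 X \<longrightarrow> F V1 E1 X)
   \<and> (\<forall>V E X Y. Y \<subseteq> X \<and> F V E X \<longrightarrow> F V E Y)"

definition lvl_edges :: "'a set set \<Rightarrow> ('a set \<Rightarrow> real) \<Rightarrow> ereal \<Rightarrow> 'a set set" where
  "lvl_edges E f w = (if w = \<infinity> then E else {e \<in> E. ereal (f e) \<le> w})"

definition lvl_verts :: "'a set \<Rightarrow> 'a set set \<Rightarrow> ('a set \<Rightarrow> real) \<Rightarrow> ereal \<Rightarrow> 'a set" where
  "lvl_verts V E f w = (if w = \<infinity> then V else \<Union> (lvl_edges E f w))"

definition F_set_at :: "'a feature \<Rightarrow> 'a set \<Rightarrow> 'a set set \<Rightarrow> ('a set \<Rightarrow> real)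
    \<Rightarrow> ereal \<Rightarrow> ('a + 'a set) set \<Rightarrow> bool" where
  "F_set_at F V E f w X \<longleftrightarrow>
     X \<subseteq> elems (lvl_verts V E f w) (lvl_edges E f w) \<and>
     F (lvl_verts V E f w) (lvl_edges E f w) X"

text \<open>Levels range over \<real> \<union> {+\<infinity>}, i.e. ereal values different from -\<infinity>.\<close>
definition steady :: "'a feature \<Rightarrow> 'a set \<Rightarrow> 'a set set \<Rightarrow> ('a set \<Rightarrow> real)
    \<Rightarrow> real \<Rightarrow> ereal \<Rightarrow> ('a + 'a set) set \<Rightarrow> bool" where
  "steady F V E f u v X \<longleftrightarrow>
     (\<forall>w. w \<noteq> -\<infinity> \<and> ereal u \<le> w \<and> w \<le> v \<longrightarrow> F_set_at F V E f w X)"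

definition ranging :: "'a feature \<Rightarrow> 'a set \<Rightarrow> 'a set set \<Rightarrow> ('a set \<Rightarrow> real)
    \<Rightarrow> real \<Rightarrow> ereal \<Rightarrow> ('a + 'a set) set \<Rightarrow> bool" where
  "ranging F V E f u v X \<longleftrightarrow>
     (\<exists>w. w \<noteq> -\<infinity> \<and> w \<le> ereal u \<and> F_set_at F V E f w X) \<and>
     (\<exists>w'. w' \<noteq> -\<infinity> \<and> v \<le> w' \<and> F_set_at F V E f w' X)"

definition sigma :: "'a feature \<Rightarrow> 'a set \<Rightarrow> 'a set set \<Rightarrow> ('a set \<Rightarrow> real)
    \<Rightarrow> real \<Rightarrow> ereal \<Rightarrow> nat" where
  "sigma F V E f u v = card {X. X \<subseteq> elems V E \<and> steady F V E f u v X}"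

definition rho :: "'a feature \<Rightarrow> 'a set \<Rightarrow> 'a set set \<Rightarrow> ('a set \<Rightarrow> real)
    \<Rightarrow> real \<Rightarrow> ereal \<Rightarrow> nat" where
  "rho F V E f u v = card {X. X \<subseteq> elems V E \<and> ranging F V E f u v X}"

end

theory Submission
  imports Defs
begin

lemma elems_mono: "V1 \<subseteq> V2 \<Longrightarrow> E1 \<subseteq> E2 \<Longrightarrow> elems V1 E1 \<subseteq> elems V2 E2"
  unfolding elems_def by auto

lemma mono1:
  assumes "monotone_feature F" "is_graph V1 E1" "is_graph V2 E2" "V1 \<subseteq> V2" "E1 \<subseteq> E2"
    "X \<subseteq> elems V1 E1" "F V2 E2 X"
  shows "F V1 E1 X"
proof -
  have "\<forall>V1 E1 V2 E2 X. is_graph V1 E1 \<and> is_graph V2 E2 \<and> V1 \<subseteq> V2 \<and> E1 \<subseteq> E2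
        \<and> X \<subseteq> elems V1 E1 \<and> F V2 E2 X \<longrightarrow> F V1 E1 X"
    using assms(1) unfolding monotone_feature_def by (rule conjunct1)
  then show ?thesis using assms(2-7) by blast
qed

lemma lvl_sub:
  assumes "is_graph V E"
  shows "lvl_edges E f w \<subseteq> E" "lvl_verts V E f w \<subseteq> V"
  using assms unfolding is_graph_def lvl_edges_def lvl_verts_def by auto

lemma lvl_graph:
  assumes "is_graph V E"
  shows "is_graph (lvl_verts V E f w) (lvl_edges E f w)"
proof -
  have "finite (lvl_verts V E f w)" using lvl_sub[OF assms] assms
    unfolding is_graph_def by (meson finite_subset)
  moreover have "\<forall>e\<in>lvl_edges E f w. \<exists>x y. x \<noteq> y \<and> e = {x, y} \<and> x \<in> lvl_verts V E f w \<and> y \<in> lvl_verts V E f w"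
  proof
    fix e assume e: "e \<in> lvl_edges E f w"
    then have "e \<in> E" using lvl_sub[OF assms] by auto
    then obtain x y where xy: "x \<noteq> y" "e = {x,y}" "x \<in> V" "y \<in> V" using assms unfolding is_graph_def by blast
    have "x \<in> e" "y \<in> e" using xy(2) by simp_all
    then have "x \<in> lvl_verts V E f w \<and> y \<in> lvl_verts V E f w"
      using e xy(3,4) unfolding lvl_verts_def by (cases "w = \<infinity>") (simp_all, blast)
    then show "\<exists>x y. x \<noteq> y \<and> e = {x, y} \<and> x \<in> lvl_verts V E f w \<and> y \<in> lvl_verts V E f w"
      using xy by blast
  qed
  ultimately show ?thesis unfolding is_graph_def by blast
qed

lemma lvl_mono:
  assumes "is_graph V E" "w \<le> w'"
  shows "lvl_edges E f w \<subseteq> lvl_edges E f w'" "lvl_verts V E f w \<subseteq> lvl_verts V E f w'"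
proof -
  show 1: "lvl_edges E f w \<subseteq> lvl_edges E f w'"
    using assms(2) unfolding lvl_edges_def by (auto intro: order_trans)
  show "lvl_verts V E f w \<subseteq> lvl_verts V E f w'"
  proof (cases "w' = \<infinity>")
    case True then show ?thesis using lvl_sub[OF assms(1)] by (simp add: lvl_verts_def)
  next
    case False
    then have "w \<noteq> \<infinity>" using assms(2) by auto
    then show ?thesis using False 1 unfolding lvl_verts_def by auto
  qed
qed

lemma lvl_shift:
  assumes "is_graph V E" "\<forall>e\<in>E. \<bar>f e - g e\<bar> \<le> h" "w \<noteq> -\<infinity>"
  shows "lvl_edges E g w \<subseteq> lvl_edges E f (w + ereal h)"
        "lvl_verts V E g w \<subseteq> lvl_verts V E f (w + ereal h)"
proof -
  show 1: "lvl_edges E g w \<subseteq> lvl_edges E f (w + ereal h)"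
  proof (cases "w = \<infinity>")
    case True then show ?thesis by (simp add: lvl_edges_def)
  next
    case False
    then obtain r where r: "w = ereal r" using assms(3) by (cases w) auto
    show ?thesis unfolding lvl_edges_def r using assms(2) by force
  qed
  show "lvl_verts V E g w \<subseteq> lvl_verts V E f (w + ereal h)"
  proof (cases "w = \<infinity>")
    case True then show ?thesis by (simp add: lvl_verts_def)
  next
    case False
    then obtain r where r: "w = ereal r" using assms(3) by (cases w) auto
    then show ?thesis using 1 unfolding lvl_verts_def by auto
  qed
qed

lemma F_transfer:
  assumes mon: "monotone_feature F" and G: "is_graph V E"
    and sm: "\<forall>e\<in>E. \<bar>f e - g e\<bar> \<le> h" and w: "w \<noteq> -\<infinity>"
    and X: "X \<subseteq> elems (lvl_verts V E g w) (lvl_edges E g w)"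
    and Fs: "F_set_at F V E f (w + ereal h) X"
  shows "F_set_at F V E g w X"
proof -
  have "F (lvl_verts V E f (w + ereal h)) (lvl_edges E f (w + ereal h)) X"
    using Fs unfolding F_set_at_def by blast
  then have "F (lvl_verts V E g w) (lvl_edges E g w) X"
    by (rule mono1[OF mon lvl_graph[OF G, of g w] lvl_graph[OF G, of f "w + ereal h"]
      lvl_shift(2)[OF G sm w] lvl_shift(1)[OF G sm w] X])
  then show ?thesis using X unfolding F_set_at_def by blast
qed

lemma steady_transfer:
  assumes mon: "monotone_feature F" and G: "is_graph V E" and h: "h > 0"
    and sm: "\<forall>e\<in>E. \<bar>f e - g e\<bar> \<le> h" and uv: "ereal u < v"
    and S: "steady F V E f (u - h) (v + ereal h) X"
  shows "steady F V E g u v X"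
  unfolding steady_def
proof (intro allI impI)
  fix w assume w: "w \<noteq> -\<infinity> \<and> ereal u \<le> w \<and> w \<le> v"
  have sm': "\<forall>e\<in>E. \<bar>g e - f e\<bar> \<le> h" using sm by (simp add: abs_minus_commute)
  have "F_set_at F V E f (ereal (u - h)) X"
  proof -
    have "ereal (u - h) \<le> v + ereal h" using uv h by (cases v) auto
    then show ?thesis using S unfolding steady_def by auto
  qed
  then have X1: "X \<subseteq> elems (lvl_verts V E f (ereal (u - h))) (lvl_edges E f (ereal (u - h)))"
    unfolding F_set_at_def by blast
  have "ereal (u - h) + ereal h = ereal u" by simp
  then have "X \<subseteq> elems (lvl_verts V E g (ereal u)) (lvl_edges E g (ereal u))"
    using X1 lvl_shift[OF G sm', of "ereal (u - h)"] elems_mono by (metis MInfty_neq_ereal(2) order_trans)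
  also have "\<dots> \<subseteq> elems (lvl_verts V E g w) (lvl_edges E g w)"
    using lvl_mono[OF G, of "ereal u" w g] w elems_mono by blast
  finally have X: "X \<subseteq> elems (lvl_verts V E g w) (lvl_edges E g w)" .
  have "F_set_at F V E f (w + ereal h) X"
  proof -
    have a: "w + ereal h \<noteq> -\<infinity>" using w by (cases w) auto
    have b: "ereal (u - h) \<le> w + ereal h" using w h
      by (cases w) auto
    have c: "w + ereal h \<le> v + ereal h" using w by (simp add: add_right_mono)
    show ?thesis using S a b c unfolding steady_def by blast
  qed
  then show "F_set_at F V E g w X" using F_transfer[OF mon G sm _ X] w by blast
qed

lemma ranging_steady:
  assumes mon: "monotone_feature F" and G: "is_graph V E"
    and R: "ranging F V E f a b X"
  shows "steady F V E f a b X"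
  unfolding steady_def
proof (intro allI impI)
  fix t assume t: "t \<noteq> -\<infinity> \<and> ereal a \<le> t \<and> t \<le> b"
  obtain w w' where w: "w \<noteq> -\<infinity>" "w \<le> ereal a" "F_set_at F V E f w X"
    and w': "w' \<noteq> -\<infinity>" "b \<le> w'" "F_set_at F V E f w' X"
    using R unfolding ranging_def by blast
  have "X \<subseteq> elems (lvl_verts V E f w) (lvl_edges E f w)" using w(3) unfolding F_set_at_def by blast
  also have "\<dots> \<subseteq> elems (lvl_verts V E f t) (lvl_edges E f t)"
  proof -
    have "w \<le> t" using w(2) t by (meson order_trans)
    then show ?thesis using lvl_mono[OF G, of w t f] elems_mono by blast
  qed
  finally have X: "X \<subseteq> elems (lvl_verts V E f t) (lvl_edges E f t)" .
  have tw: "t \<le> w'" using t w'(2) by (meson order_trans)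
  have "F (lvl_verts V E f t) (lvl_edges E f t) X"
    using w'(3) unfolding F_set_at_def
    by (intro mono1[OF mon lvl_graph[OF G, of f t] lvl_graph[OF G, of f w'] lvl_mono(2)[OF G tw, of f] lvl_mono(1)[OF G tw, of f] X]) blast
  then show "F_set_at F V E f t X" using X unfolding F_set_at_def by blast
qed

lemma steady_ranging:
  assumes "ereal a \<le> b" "steady F V E f a b X"
  shows "ranging F V E f a b X"
proof -
  have b: "b \<noteq> -\<infinity>" using assms(1) by auto
  have a: "ereal a \<noteq> -\<infinity>" by simp
  have 1: "F_set_at F V E f (ereal a) X" using assms(2) a assms(1) unfolding steady_def by blast
  have 2: "F_set_at F V E f b X" using assms(2) b assms(1) unfolding steady_def by blast
  show ?thesis unfolding ranging_def using 1 2 a b by blast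
qed

lemma E_Pow: assumes "is_graph V E" shows "E \<subseteq> Pow V"
proof
  fix e assume "e \<in> E"
  then obtain x y where "e = {x,y}" "x \<in> V" "y \<in> V" using assms unfolding is_graph_def by blast
  then show "e \<in> Pow V" by simp
qed

lemma fin_sets:
  assumes "is_graph V E"
  shows "finite {X. X \<subseteq> elems V E \<and> P X}"
proof -
  have fV: "finite V" using assms unfolding is_graph_def by simp
  then have "finite (Pow V)" by simp
  then have fE: "finite E" using E_Pow[OF assms] finite_subset by blast
  have "finite (elems V E)" using fV fE unfolding elems_def by simp
  then have "finite (Pow (elems V E))" by simp
  moreover have "{X. X \<subseteq> elems V E \<and> P X} \<subseteq> Pow (elems V E)" by blast
  ultimately show ?thesis by (rule finite_subset[rotated])
qed

theorem proposition4:
  fixes F :: "'a feature" and V :: "'a set" and E :: "'a set set"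
    and f g :: "'a set \<Rightarrow> real" and h u :: real and v :: ereal
  assumes "monotone_feature F"
    and "is_graph V E"
    and "h > 0"
    and "\<forall>e\<in>E. \<bar>f e - g e\<bar> \<le> h"
    and "ereal u < v"
  shows "sigma F V E f (u - h) (v + ereal h) \<le> sigma F V E g u v
       \<and> rho F V E f (u - h) (v + ereal h) \<le> rho F V E g u v"
proof
  have A: "{X. X \<subseteq> elems V E \<and> steady F V E f (u - h) (v + ereal h) X}
      \<subseteq> {X. X \<subseteq> elems V E \<and> steady F V E g u v X}"
  proof
    fix X assume "X \<in> {X. X \<subseteq> elems V E \<and> steady F V E f (u - h) (v + ereal h) X}"
    then have "X \<subseteq> elems V E" "steady F V E f (u - h) (v + ereal h) X" by simp_all
    then show "X \<in> {X. X \<subseteq> elems V E \<and> steady F V E g u v X}"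
      using steady_transfer[OF assms] by simp
  qed
  show "sigma F V E f (u - h) (v + ereal h) \<le> sigma F V E g u v"
    unfolding sigma_def by (rule card_mono[OF fin_sets[OF assms(2)] A])
  have B: "{X. X \<subseteq> elems V E \<and> ranging F V E f (u - h) (v + ereal h) X}
      \<subseteq> {X. X \<subseteq> elems V E \<and> ranging F V E g u v X}"
  proof
    fix X assume "X \<in> {X. X \<subseteq> elems V E \<and> ranging F V E f (u - h) (v + ereal h) X}"
    then have 1: "X \<subseteq> elems V E" "ranging F V E f (u - h) (v + ereal h) X" by simp_all
    have "steady F V E f (u - h) (v + ereal h) X" by (rule ranging_steady[OF assms(1,2) 1(2)])
    then have "steady F V E g u v X" by (rule steady_transfer[OF assms])
    then have "ranging F V E g u v X" using assms(5) by (intro steady_ranging) simp_all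
    then show "X \<in> {X. X \<subseteq> elems V E \<and> ranging F V E g u v X}"
      using 1 by simp
  qed
  show "rho F V E f (u - h) (v + ereal h) \<le> rho F V E g u v"
    unfolding rho_def by (rule card_mono[OF fin_sets[OF assms(2)] B])
qed

end
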